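(* Let $g_1,g_2$ be monic divisors of $x^m-1$, $v_1,v_2\in\mathcal{R}$ with $\gcd(v_1v_2-1,x^m-1)=1$, and let $\mathcal{C}$ be the QC code of length $2m$ generated by $(g_1,v_1g_1)$ and $(v_2g_2,g_2)$. Then: (A) over $\mathbb{F}_q$, the Euclidean dual $\mathcal{C}^{\perp_E}$ is the QC code generated by $(g_1^{\perp},-\overline{v_2}g_1^{\perp})$ and $(-\overline{v_1}g_2^{\perp},g_2^{\perp})$; (B) over $\mathbb{F}_{q^2}$, the Hermitian dual $\mathcal{C}^{\perp_H}$ is the QC code generated by $(g_1^{\perp_H},-\overline{v_2}^{[q]}g_1^{\perp_H})$ and $(-\overline{v_1}^{[q]}g_2^{\perp_H},g_2^{\perp_H})$; (C) over $\mathbb{F}_q$, the symplectic dual $\mathcal{C}^{\perp_S}$ is the QC code generated by $(g_2^{\perp},\overline{v_1}g_2^{\perp})$ and $(\overline{v_2}g_1^{\perp},g_1^{\perp})$.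
   Context: $q$ a prime power; $\mathcal{R}=\mathbb{F}[x]/(x^m-1)$ with $\mathbb{F}$ as indicated; elements identified with representatives of degree $<m$; $[k]=(k_0,\dots,k_{m-1})$; $\overline{k}(x)=k(x^{-1})\bmod(x^m-1)$; $k^{[q]}=\sum k_i^qx^i$; for a nonzero polynomial $f$, $f^*(x)=x^{\deg f}f(1/x)$; for $k\in\mathcal{R}$, with $f=\frac{x^m-1}{\gcd(k,x^m-1)}$, $k^{\perp}=f(0)^{-1}f^*$, and $k^{\perp_H}=(k^{[q]})^{\perp}$. The QC code generated by $(u_{i1},u_{i2})$, $i=1,2$, is $\{([r_1u_{11}+r_2u_{21}],[r_1u_{12}+r_2u_{22}]):r_1,r_2\in\mathcal{R}\}\subseteq\mathbb{F}^{2m}$. Inner products: Euclidean $\sum u_iv_i$; Hermitian $\sum u_i^qv_i$; symplectic on $\mathbb{F}^{2m}$: $\sum_{i=1}^m(u_iv_{m+i}-u_{m+i}v_i)$; duals are the orthogonal complements w.r.t. these forms. *)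

theory Defs
  imports "HOL-Computational_Algebra.Computational_Algebra" "HOL-Library.Cardinality"
begin

definition xm1 :: "nat \<Rightarrow> 'a::field poly" where
  "xm1 m = monom 1 m - 1"

definition red :: "nat \<Rightarrow> 'a::field poly \<Rightarrow> 'a poly" where
  "red m p = p mod xm1 m"

definition coeff_vec :: "nat \<Rightarrow> 'a::zero poly \<Rightarrow> 'a list" where
  "coeff_vec m k = map (coeff k) [0..<m]"

text \<open>Conjugation: k(x^{-1}) mod (x^m - 1).\<close>
definition bar :: "nat \<Rightarrow> 'a::field poly \<Rightarrow> 'a poly" where
  "bar m k = (\<Sum>i<m. monom (coeff (red m k) i) ((m - i) mod m))"

definition frob :: "nat \<Rightarrow> 'a::field poly \<Rightarrow> 'a poly" where
  "frob q k = map_poly (\<lambda>c. c ^ q) k"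

definition perp :: "nat \<Rightarrow> 'a::field_gcd poly \<Rightarrow> 'a poly" where
  "perp m k = (let f = xm1 m div gcd k (xm1 m)
               in smult (inverse (coeff f 0)) (reflect_poly f))"

definition perpH :: "nat \<Rightarrow> nat \<Rightarrow> 'a::field_gcd poly \<Rightarrow> 'a poly" where
  "perpH q m k = perp m (frob q k)"

definition qc_code :: "nat \<Rightarrow> 'a::field poly \<Rightarrow> 'a poly \<Rightarrow> 'a poly \<Rightarrow> 'a poly \<Rightarrow> 'a list set" where
  "qc_code m u11 u12 u21 u22 =
     {coeff_vec m (red m (r1 * u11 + r2 * u21)) @ coeff_vec m (red m (r1 * u12 + r2 * u22)) | r1 r2. True}"

definition euclid_ip :: "nat \<Rightarrow> 'a::field list \<Rightarrow> 'a list \<Rightarrow> 'a" where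
  "euclid_ip m u v = (\<Sum>i<2*m. u ! i * v ! i)"

definition herm_ip :: "nat \<Rightarrow> nat \<Rightarrow> 'a::field list \<Rightarrow> 'a list \<Rightarrow> 'a" where
  "herm_ip q m u v = (\<Sum>i<2*m. (u ! i) ^ q * v ! i)"

definition symp_ip :: "nat \<Rightarrow> 'a::field list \<Rightarrow> 'a list \<Rightarrow> 'a" where
  "symp_ip m u v = (\<Sum>i<m. u ! i * v ! (m + i) - u ! (m + i) * v ! i)"

definition dual :: "nat \<Rightarrow> ('a list \<Rightarrow> 'a list \<Rightarrow> 'a::field) \<Rightarrow> 'a list set \<Rightarrow> 'a list set" where
  "dual m B C = {v. length v = 2 * m \<and> (\<forall>u\<in>C. B u v = 0)}"

end

theory Submission
  imports Defs "HOL-Number_Theory.Cong" "HOL-Algebra.Sylow"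
begin

lemma xm1_deg: "m > 0 \<Longrightarrow> degree (xm1 m :: 'a::field poly) = m"
proof -
  assume m: "m > 0"
  have "degree (monom (1::'a) m - 1) = degree (monom (1::'a) m + (- 1))" by simp
  also have "\<dots> = m" using m by (subst degree_add_eq_left) (auto simp: degree_monom_eq)
  finally show ?thesis unfolding xm1_def .
qed

lemma xm1_nz: "m > 0 \<Longrightarrow> xm1 m \<noteq> (0::'a::field poly)"
proof
  assume m: "m > 0" and z: "xm1 m = (0::'a poly)"
  have "degree (xm1 m :: 'a poly) = m" by (rule xm1_deg[OF m])
  thus False using m z by simp
qed

lemma red_small: "m > 0 \<Longrightarrow> degree p < m \<Longrightarrow> red m (p::'a::field poly) = p"
  unfolding red_def by (rule mod_poly_less) (simp add: xm1_deg)

lemma red_deg: "m > 0 \<Longrightarrow> degree (red m (p::'a::field poly)) < m"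
  proof -
  assume m: "m > 0"
  have d: "degree (xm1 m :: 'a poly) = m" using xm1_deg[OF m] .
  show ?thesis
    unfolding red_def using degree_mod_less[OF xm1_nz[OF m], of p] d m by (cases "p mod xm1 m = 0") auto
qed

lemma red_red[simp]: "red m (red m p) = red m p"
  by (simp add: red_def)

lemma red_add: "red m (p + q) = red m p + red m (q::'a::field poly)"
  by (simp add: red_def poly_mod_add_left)

lemma red_diff: "red m (p - q) = red m p - red m (q::'a::field poly)"
  by (simp add: red_def poly_mod_diff_left)

lemma red_minus: "red m (- q) = - red m (q::'a::field poly)"
  by (simp add: red_def)

lemma red_smult: "red m (smult c q) = smult c (red m (q::'a::field poly))"
  by (simp add: red_def mod_smult_left)

lemma red_sum: "red m (sum f A) = (\<Sum>i\<in>A. red m (f i :: 'a::field poly))"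
proof (induction A rule: infinite_finite_induct)
  case (insert x F) thus ?case by (simp add: red_add)
qed (simp_all add: red_def)

lemma red_mult: "red m (p * q) = red m (red m p * red m (q::'a::field poly))"
  by (simp add: red_def mod_mult_eq)

lemma red_mult_left: "red m (red m p * q) = red m (p * (q::'a::field poly))"
  by (simp add: red_def mod_mult_left_eq)

lemma red_mult_right: "red m (p * red m q) = red m (p * (q::'a::field poly))"
  by (simp add: red_def mod_mult_right_eq)

lemma monom_1_pow: "(monom (1::'a::comm_semiring_1) m) ^ k = monom 1 (m * k)"
proof (induction k)
  case (Suc k) thus ?case by (simp add: mult_monom)
qed simp

lemma red_monom: "m > 0 \<Longrightarrow> red m (monom (c::'a::field) e) = monom c (e mod m)"
proof -
  assume m: "m > 0"
  let ?N = "xm1 m :: 'a poly"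
  have dN: "degree ?N = m" by (rule xm1_deg[OF m])
  have deg1: "degree (1::'a poly) < degree ?N" using dN m by simp
  have xm: "monom 1 m mod ?N = 1"
  proof -
    have "monom 1 m = ?N + 1" by (simp add: xm1_def)
    hence "monom 1 m mod ?N = 1 mod ?N" by simp
    also have "\<dots> = 1" using deg1 by (rule mod_poly_less)
    finally show ?thesis .
  qed
  have pw: "(monom 1 m) ^ k mod ?N = 1" for k
  proof -
    have "(monom 1 m) ^ k mod ?N = (monom 1 m mod ?N) ^ k mod ?N" by (simp add: power_mod)
    also have "\<dots> = 1" using xm deg1 by (simp add: mod_poly_less)
    finally show ?thesis .
  qed
  have e: "monom c e = monom c (e mod m) * (monom 1 m) ^ (e div m)"
    by (simp add: monom_1_pow mult_monom)
  have "red m (monom c e) = (monom c (e mod m) * ((monom 1 m) ^ (e div m) mod ?N)) mod ?N"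
    unfolding red_def e by (simp add: mod_mult_right_eq)
  also have "\<dots> = monom c (e mod m) mod ?N" by (simp add: pw)
  also have "\<dots> = monom c (e mod m)"
  proof (rule mod_poly_less)
    have "degree (monom c (e mod m)) \<le> e mod m" by (rule degree_monom_le)
    also have "e mod m < m" using m by simp
    finally show "degree (monom c (e mod m)) < degree ?N" using dN by simp
  qed
  finally show ?thesis .
qed


lemma red_cong_iff: "red m a = red m b \<longleftrightarrow> [a = b] (mod xm1 m)"
  by (simp add: red_def cong_def)

lemma red_zero_iff: "red m a = 0 \<longleftrightarrow> xm1 m dvd (a::'a::field poly)"
  by (simp add: red_def dvd_eq_mod_eq_0)

lemma poly_sum_monoms_less:
  assumes "degree p < m"
  shows "(\<Sum>i<m. monom (coeff p i) i) = (p::'a::comm_semiring_1 poly)"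
proof (rule poly_eqI)
  fix n
  have "coeff (\<Sum>i<m. monom (coeff p i) i) n = (\<Sum>i<m. if n = i then coeff p i else 0)"
    by (simp add: coeff_sum coeff_monom)
  also have "\<dots> = (if n < m then coeff p n else 0)"
    by (simp add: sum.delta)
  also have "\<dots> = coeff p n" using assms by (auto intro!: coeff_eq_0)
  finally show "coeff (\<Sum>i<m. monom (coeff p i) i) n = coeff p n" .
qed

lemma arith1:
  assumes "i < m" "j < (m::nat)"
  shows "((j + (m - i) mod m) mod m = 0) \<longleftrightarrow> i = j"
proof (cases "i = 0")
  case True thus ?thesis using assms by auto
next
  case False
  hence e: "(m - i) mod m = m - i" using assms by simp
  show ?thesis
  proof (cases "j < i")
    case True
    hence "j + (m - i) < m" using assms by linarith
    moreover have "j + (m - i) > 0" using assms by linarith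
    ultimately show ?thesis using e True assms by auto
  next
    case False
    hence "j + (m - i) mod m = (j - i) + m" using e assms by linarith
    moreover have "j - i < m" using assms by linarith
    ultimately have "(j + (m - i) mod m) mod m = j - i" by simp
    thus ?thesis using False by auto
  qed
qed

lemma pairing_lemma:
  assumes m: "m > 0"
  shows "(\<Sum>i<m. coeff (red m a) i * coeff (red m b) i) = coeff (red m (a * bar m b)) 0"
proof -
  define a' where "a' = red m (a::'a::field poly)"
  define b' where "b' = red m (b::'a poly)"
  have da: "degree a' < m" unfolding a'_def using red_deg[OF m] .
  have ea: "a' = (\<Sum>j<m. monom (coeff a' j) j)" using poly_sum_monoms_less[OF da] by simp
  have eb: "bar m b = (\<Sum>i<m. monom (coeff b' i) ((m - i) mod m))" unfolding bar_def b'_def ..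
  have "red m (a * bar m b) = red m (a' * bar m b)" unfolding a'_def by (simp add: red_mult_left)
  also have "a' * bar m b = (\<Sum>j<m. monom (coeff a' j) j) * (\<Sum>i<m. monom (coeff b' i) ((m - i) mod m))"
    by (rule arg_cong2[where f="(*)", OF ea eb])
  also have "\<dots> = (\<Sum>j<m. \<Sum>i<m. monom (coeff a' j * coeff b' i) (j + (m - i) mod m))"
    by (simp add: sum_product mult_monom)
  finally have "red m (a * bar m b) = (\<Sum>j<m. \<Sum>i<m. monom (coeff a' j * coeff b' i) ((j + (m - i) mod m) mod m))"
    by (simp add: red_sum red_monom[OF m])
  hence "coeff (red m (a * bar m b)) 0 = (\<Sum>j<m. \<Sum>i<m. if (j + (m - i) mod m) mod m = 0 then coeff a' j * coeff b' i else 0)"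
    by (simp add: coeff_sum coeff_monom)
  also have "\<dots> = (\<Sum>j<m. \<Sum>i<m. if i = j then coeff a' j * coeff b' i else 0)"
    by (intro sum.cong refl) (simp add: arith1)
  also have "\<dots> = (\<Sum>j<m. coeff a' j * coeff b' j)"
    by (simp add: sum.delta')
  finally show ?thesis unfolding a'_def b'_def by simp
qed

definition sig :: "nat \<Rightarrow> 'a::field poly \<Rightarrow> 'a poly" where
  "sig m p = pcompose p (monom 1 (m - 1))"

lemma pcompose_monom': "pcompose (monom c n) q = smult c (q ^ n)"
proof (induction n)
  case 0 thus ?case by (simp add: monom_0)
next
  case (Suc n) thus ?case by (simp add: monom_Suc pcompose_pCons)
qed

lemma sig_monom: "sig m (monom c n) = monom c ((m - 1) * n)"
  by (simp add: sig_def pcompose_monom' monom_1_pow smult_monom)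

lemma sig_add: "sig m (p + q) = sig m p + sig m q" by (simp add: sig_def pcompose_add)
lemma sig_diff: "sig m (p - q) = sig m p - sig m q" by (simp add: sig_def pcompose_diff)
lemma sig_minus: "sig m (- q) = - sig m q" by (simp add: sig_def pcompose_uminus)
lemma sig_mult: "sig m (p * q) = sig m p * sig m q" by (simp add: sig_def pcompose_mult)
lemma sig_smult: "sig m (smult c q) = smult c (sig m q)" by (simp add: sig_def pcompose_smult)
lemma sig_one: "sig m 1 = 1" by (simp add: sig_def pcompose_1)
lemma sig_sum: "sig m (sum f A) = (\<Sum>i\<in>A. sig m (f i))" by (simp add: sig_def pcompose_sum)

lemma red_one: "m > 0 \<Longrightarrow> red m (1::'a::field poly) = 1"
  using red_monom[of m "1::'a" 0] by (simp add: monom_0 one_pCons)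

lemma xm1_dvd_sig_xm1: "m > 0 \<Longrightarrow> xm1 m dvd sig m (xm1 m :: 'a::field poly)"
proof -
  assume m: "m > 0"
  have "sig m (xm1 m :: 'a poly) = monom 1 ((m - 1) * m) - 1"
    by (simp add: xm1_def sig_diff sig_monom sig_one)
  moreover have "red m (monom (1::'a) ((m - 1) * m) - 1) = 0"
    using m by (simp add: red_diff red_monom red_one)
  ultimately show ?thesis by (simp add: red_zero_iff)
qed

lemma sig_cong: 
  assumes m: "m > 0" and "[a = b] (mod xm1 m)"
  shows "[sig m a = sig m (b::'a::field poly)] (mod xm1 m)"
proof -
  from assms(2) have "xm1 m dvd a - b" by (simp add: cong_iff_dvd_diff)
  then obtain k where k: "a - b = xm1 m * k" by auto
  have "sig m a - sig m b = sig m (xm1 m) * sig m k" by (simp add: sig_diff[symmetric] k sig_mult)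
  hence "xm1 m dvd sig m a - sig m b" using dvd_mult2[OF xm1_dvd_sig_xm1[OF m]] by simp
  thus ?thesis by (simp add: cong_iff_dvd_diff)
qed

lemma pcompose_cong:
  assumes "[X = Y] (mod (N::'a::field poly))"
  shows "[pcompose a X = pcompose a Y] (mod N)"
proof (induction a)
  case 0 thus ?case by simp
next
  case (pCons c p)
  have "[[:c:] + X * pcompose p X = [:c:] + Y * pcompose p Y] (mod N)"
    by (intro cong_add cong_mult cong_refl assms pCons.IH)
  thus ?case by (simp add: pcompose_pCons)
qed

lemma arith2: "(m::nat) > 0 \<Longrightarrow> ((m - 1) * (m - 1)) mod m = 1 mod m"
proof -
  assume "m > 0"
  then obtain k where k: "m = Suc k" by (cases m) auto
  show ?thesis
  proof (cases k)
    case 0 thus ?thesis using k by simp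
  next
    case (Suc l)
    have "(m - 1) * (m - 1) = 1 + m * l" unfolding k Suc by (simp add: algebra_simps)
    thus ?thesis by (simp only: mod_mult_self2)
  qed
qed

lemma sig_sig:
  assumes m: "m > 0"
  shows "[sig m (sig m a) = (a::'a::field poly)] (mod xm1 m)"
proof -
  have "sig m (sig m a) = pcompose a (pcompose (monom 1 (m - 1)) (monom 1 (m - 1)))"
    by (simp add: sig_def pcompose_assoc)
  also have "pcompose (monom (1::'a) (m - 1)) (monom 1 (m - 1)) = monom 1 ((m - 1) * (m - 1))"
    by (simp add: pcompose_monom' monom_1_pow smult_monom mult.commute)
  finally have e: "sig m (sig m a) = pcompose a (monom 1 ((m - 1) * (m - 1)))" .
  have a2: "((m - 1) * (m - 1)) mod m = 1 mod m" by (rule arith2[OF m])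
  have "red m (monom (1::'a) ((m - 1) * (m - 1))) = red m (monom 1 1)" by (simp only: red_monom[OF m] a2)
  hence "[monom (1::'a) ((m - 1) * (m - 1)) = monom 1 1] (mod xm1 m)"
    by (simp add: red_cong_iff)
  hence "[pcompose a (monom 1 ((m - 1) * (m - 1))) = pcompose a (monom 1 1)] (mod xm1 m)"
    by (rule pcompose_cong)
  moreover have "pcompose a (monom 1 1) = a"
    using pcompose_idR[of a] by (simp add: monom_Suc monom_0 one_pCons)
  ultimately have "[pcompose a (monom 1 ((m - 1) * (m - 1))) = a] (mod xm1 m)" by metis
  thus ?thesis unfolding e .
qed

lemma arith3: "i < (m::nat) \<Longrightarrow> ((m - 1) * i) mod m = (m - i) mod m"
proof (cases i)
  case 0 thus ?thesis by simp
next
  case (Suc j)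
  assume "i < m"
  have "(m - 1) * i = (m - i) + m * j" using \<open>i < m\<close> unfolding Suc
    by (cases m) (auto simp: algebra_simps)
  thus ?thesis by simp
qed

lemma bar_sig:
  assumes m: "m > 0"
  shows "[bar m b = sig m (b::'a::field poly)] (mod xm1 m)"
proof -
  define b' where "b' = red m b"
  have db: "degree b' < m" unfolding b'_def using red_deg[OF m] .
  have "red m (bar m b) = (\<Sum>i<m. monom (coeff b' i) ((m - i) mod m))"
    unfolding bar_def b'_def by (simp add: red_sum red_monom[OF m])
  also have "\<dots> = (\<Sum>i<m. monom (coeff b' i) (((m - 1) * i) mod m))"
  proof (rule sum.cong[OF refl])
    fix i assume "i \<in> {..<m}"
    hence "((m - 1) * i) mod m = (m - i) mod m" by (intro arith3) simp
    thus "monom (coeff b' i) ((m - i) mod m) = monom (coeff b' i) (((m - 1) * i) mod m)" by simp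
  qed
  also have "\<dots> = red m (sig m b')"
    by (subst (2) poly_sum_monoms_less[OF db, symmetric]) (simp add: sig_sum sig_monom red_sum red_monom[OF m])
  finally have "[bar m b = sig m b'] (mod xm1 m)" by (simp add: red_cong_iff)
  moreover have "[sig m b' = sig m b] (mod xm1 m)"
    by (rule sig_cong[OF m]) (simp add: b'_def red_cong_iff[symmetric])
  ultimately show ?thesis by (rule cong_trans)
qed

lemma sig_bar:
  assumes m: "m > 0"
  shows "[sig m (bar m b) = (b::'a::field poly)] (mod xm1 m)"
  using cong_trans[OF sig_cong[OF m bar_sig[OF m]] sig_sig[OF m]] .

lemma monic_gcd_xm1:
  assumes "lead_coeff g = 1" "g dvd xm1 m"
  shows "gcd g (xm1 m) = (g::'a::field_gcd poly)"
proof -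
  have "gcd g (xm1 m) = normalize g" using assms(2) by (rule gcd_proj1_if_dvd)
  also have "normalize g = g" using assms(1) by (simp add: normalize_poly_def one_pCons[symmetric])
  finally show ?thesis .
qed

lemma coeff_xm1_0: "m > 0 \<Longrightarrow> coeff (xm1 m :: 'a::field poly) 0 = -1"
  by (simp add: xm1_def coeff_monom)

lemma cofactor_facts:
  assumes m: "m > 0" and g: "lead_coeff g = 1" "g dvd xm1 m"
  shows "g * (xm1 m div g) = (xm1 m :: 'a::field_gcd poly)" "coeff (xm1 m div g) 0 \<noteq> 0"
    "perp m g = smult (inverse (coeff (xm1 m div g) 0)) (reflect_poly (xm1 m div g))" "g \<noteq> 0"
proof -
  show gf: "g * (xm1 m div g) = (xm1 m :: 'a::field_gcd poly)" using g(2) by simp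
  have "coeff g 0 * coeff (xm1 m div g) 0 = -1"
    using arg_cong[OF gf, of "\<lambda>p. coeff p 0"] coeff_xm1_0[OF m, where 'a='a] by (simp add: coeff_mult_0)
  thus "coeff (xm1 m div g) 0 \<noteq> 0" by auto
  show "perp m g = smult (inverse (coeff (xm1 m div g) 0)) (reflect_poly (xm1 m div g))"
    unfolding perp_def monic_gcd_xm1[OF g] Let_def ..
  show "g \<noteq> 0" using g(1) by auto
qed

lemma arith4: "i \<le> (d::nat) \<Longrightarrow> (m::nat) > 0 \<Longrightarrow> ((m - 1) * i + d) mod m = (d - i) mod m"
proof -
  assume "i \<le> d" "m > 0"
  hence "(m - 1) * i + d = (d - i) + m * i" by (cases m) (auto simp: algebra_simps)
  thus ?thesis by simp
qed

lemma reflect_as_sum: "reflect_poly f = (\<Sum>i\<le>degree f. monom (coeff f (degree f - i)) i)"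
proof (rule poly_eqI)
  fix n
  have "coeff (\<Sum>i\<le>degree f. monom (coeff f (degree f - i)) i) n
        = (\<Sum>i\<le>degree f. if n = i then coeff f (degree f - i) else 0)"
    by (simp add: coeff_sum coeff_monom)
  also have "\<dots> = (if n \<le> degree f then coeff f (degree f - n) else 0)"
    by (simp add: sum.delta)
  finally show "coeff (reflect_poly f) n = coeff (\<Sum>i\<le>degree f. monom (coeff f (degree f - i)) i) n"
    by (simp add: coeff_reflect_poly)
qed

lemma sig_reflect:
  assumes m: "m > 0"
  shows "[sig m (reflect_poly f) * monom 1 (degree f) = (f::'a::field poly)] (mod xm1 m)"
proof -
  define d where "d = degree f"
  have "sig m (reflect_poly f) * monom 1 d = (\<Sum>i\<le>d. monom (coeff f (d - i)) ((m - 1) * i + d))"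
    unfolding reflect_as_sum d_def[symmetric] by (simp add: sig_sum sig_monom sum_distrib_right mult_monom)
  hence "red m (sig m (reflect_poly f) * monom 1 d) = (\<Sum>i\<le>d. monom (coeff f (d - i)) (((m - 1) * i + d) mod m))"
    by (simp add: red_sum red_monom[OF m])
  also have "\<dots> = (\<Sum>i\<le>d. monom (coeff f (d - i)) ((d - i) mod m))"
  proof (rule sum.cong[OF refl])
    fix i assume "i \<in> {..d}"
    hence "((m - 1) * i + d) mod m = (d - i) mod m" using m by (intro arith4) auto
    thus "monom (coeff f (d - i)) (((m - 1) * i + d) mod m) = monom (coeff f (d - i)) ((d - i) mod m)" by simp
  qed
  also have "\<dots> = (\<Sum>k\<le>d. monom (coeff f k) (k mod m))"
    by (rule sum.reindex_bij_witness[of _ "\<lambda>k. d - k" "\<lambda>k. d - k"]) auto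
  also have "\<dots> = red m f"
    by (subst (2) poly_as_sum_of_monoms[symmetric]) (simp add: d_def red_sum red_monom[OF m])
  finally show ?thesis unfolding d_def by (simp add: red_cong_iff)
qed

lemma xpow_inv:
  assumes m: "m > 0"
  shows "[monom 1 d * monom 1 ((m - 1) * d) = (1::'a::field poly)] (mod xm1 m)"
proof -
  have "monom 1 d * monom (1::'a) ((m - 1) * d) = monom 1 (m * d)"
    using m by (simp add: mult_monom algebra_simps)
  moreover have "red m (monom (1::'a) (m * d)) = 1"
    by (simp add: red_monom[OF m] monom_0 one_pCons)
  moreover have "red m (1::'a poly) = 1" by (rule red_one[OF m])
  ultimately show ?thesis by (simp add: red_cong_iff[symmetric])
qed

lemma perp_ann:
  assumes m: "m > 0" and g: "lead_coeff g = 1" "g dvd xm1 m"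
  shows "[g * sig m (perp m g) = 0] (mod xm1 m)"
proof -
  define f where "f = xm1 m div (g::'a::field_gcd poly)"
  define d where "d = degree f"
  note cf = cofactor_facts[OF m g, folded f_def]
  define R where "R = sig m (reflect_poly f)"
  have "[g * R = g * R * (monom 1 d * monom 1 ((m - 1) * d))] (mod xm1 m)"
    using cong_mult[OF cong_refl[of "g * R"] cong_sym[OF xpow_inv[OF m, of d]]] by simp
  also have "g * R * (monom 1 d * monom 1 ((m - 1) * d)) = g * (R * monom 1 d) * monom 1 ((m - 1) * d)"
    by (simp add: algebra_simps)
  also have "[\<dots> = g * f * monom 1 ((m - 1) * d)] (mod xm1 m)"
    by (intro cong_mult cong_refl) (simp add: R_def d_def sig_reflect[OF m])
  also have "g * f * monom 1 ((m - 1) * d) = xm1 m * monom 1 ((m - 1) * d)" using cf(1) by simp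
  also have "[\<dots> = 0] (mod xm1 m)" by (simp add: cong_def)
  finally have "[g * R = 0] (mod xm1 m)" .
  hence "[smult (inverse (coeff f 0)) (g * R) = 0] (mod xm1 m)"
    using cong_scalar_left[of "g * R" 0 "xm1 m" "[:inverse (coeff f 0):]"] by simp
  thus ?thesis using cf(3) by (simp add: R_def sig_smult)
qed

lemma ann_solve:
  assumes m: "m > 0" and g: "lead_coeff g = 1" "g dvd xm1 m"
    and c: "[g * c = 0] (mod xm1 m)"
  shows "\<exists>t. [sig m c = perp m g * t] (mod xm1 m)"
proof -
  define f where "f = xm1 m div (g::'a::field_gcd poly)"
  define d where "d = degree f"
  note cf = cofactor_facts[OF m g, folded f_def]
  have "xm1 m dvd g * c" using c by (simp add: cong_def dvd_eq_mod_eq_0)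
  hence "g * f dvd g * c" using cf(1) by simp
  hence "f dvd c" using cf(4) by simp
  then obtain k where k: "c = f * k" by auto
  have "[sig m (sig m (reflect_poly f) * monom 1 d) = sig m f] (mod xm1 m)"
    using sig_cong[OF m sig_reflect[OF m, of f]] by (simp add: d_def)
  hence "[sig m (sig m (reflect_poly f)) * sig m (monom 1 d) = sig m f] (mod xm1 m)"
    by (simp add: sig_mult)
  moreover have "[sig m (sig m (reflect_poly f)) * sig m (monom 1 d) = reflect_poly f * sig m (monom 1 d)] (mod xm1 m)"
    by (intro cong_mult cong_refl sig_sig[OF m])
  ultimately have "[reflect_poly f * sig m (monom 1 d) = sig m f] (mod xm1 m)"
    using cong_sym cong_trans by blast
  moreover have "reflect_poly f * sig m (monom 1 d) = perp m g * smult (coeff f 0) (sig m (monom 1 d))"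
    using cf(2) by (simp add: cf(3))
  ultimately have "[sig m f = perp m g * smult (coeff f 0) (sig m (monom 1 d))] (mod xm1 m)"
    using cong_sym by metis
  hence "[sig m f * sig m k = perp m g * smult (coeff f 0) (sig m (monom 1 d)) * sig m k] (mod xm1 m)"
    by (intro cong_mult cong_refl)
  hence "[sig m c = perp m g * (smult (coeff f 0) (sig m (monom 1 d)) * sig m k)] (mod xm1 m)"
    by (simp add: k sig_mult mult.assoc)
  thus ?thesis by blast
qed

lemma zero_lemma:
  assumes m: "m > 0" and h: "\<And>r. coeff (red m (r * w)) 0 = 0"
  shows "[w = (0::'a::field poly)] (mod xm1 m)"
proof -
  have "coeff (red m w) k = 0" if k: "k < m" for k
  proof -
    have rk: "red m (monom (1::'a) k) = monom 1 k" using k by (simp add: red_monom[OF m])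
    have "(\<Sum>i<m. coeff (red m w) i * coeff (red m (monom 1 k)) i) = (\<Sum>i<m. if k = i then coeff (red m w) i else 0)"
      by (rule sum.cong) (auto simp: rk coeff_monom)
    also have "\<dots> = coeff (red m w) k" using k by (simp add: sum.delta)
    finally have "coeff (red m w) k = (\<Sum>i<m. coeff (red m w) i * coeff (red m (monom 1 k)) i)" ..
    also have "\<dots> = coeff (red m (w * bar m (monom 1 k))) 0" by (rule pairing_lemma[OF m])
    also have "\<dots> = 0" using h[of "bar m (monom 1 k)"] by (simp add: mult.commute)
    finally show ?thesis .
  qed
  moreover have "coeff (red m w) k = 0" if "k \<ge> m" for k
    using red_deg[OF m, of w] that by (intro coeff_eq_0) auto
  ultimately have "red m w = 0" by (intro poly_eqI) (metis coeff_0 not_le)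
  thus ?thesis by (simp add: red_cong_iff[symmetric] red_def)
qed

lemma cv_len[simp]: "length (coeff_vec m p) = m" by (simp add: coeff_vec_def)
lemma cv_nth[simp]: "i < m \<Longrightarrow> coeff_vec m p ! i = coeff p i" by (simp add: coeff_vec_def)

lemma sum_2m: "(\<Sum>i<2*(m::nat). f i) = (\<Sum>i<m. f i) + (\<Sum>i<m. (f (m + i)::'b::comm_monoid_add))"
proof -
  have "(\<Sum>i<2*m. f i) = sum f {0..<m} + sum f {m..<m+m}"
    by (simp add: sum.atLeastLessThan_concat lessThan_atLeast0 mult_2)
  also have "sum f {m..<m+m} = sum f {0+m..<m+m}" by simp
  also have "\<dots> = (\<Sum>i = 0..<m. f (i + m))" by (rule sum.shift_bounds_nat_ivl)
  finally show ?thesis by (simp add: lessThan_atLeast0 add.commute)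
qed

lemma euclid_cv:
  "euclid_ip m (coeff_vec m A @ coeff_vec m B) (coeff_vec m C @ coeff_vec m D)
    = (\<Sum>i<m. coeff A i * coeff C i) + (\<Sum>i<m. coeff B i * coeff (D::'a::field poly) i)"
  unfolding euclid_ip_def sum_2m by (simp add: nth_append)

lemma symp_cv:
  "symp_ip m (coeff_vec m A @ coeff_vec m B) (coeff_vec m C @ coeff_vec m D)
    = (\<Sum>i<m. coeff A i * coeff D i) - (\<Sum>i<m. coeff B i * coeff (C::'a::field poly) i)"
  unfolding symp_ip_def by (simp add: nth_append sum_subtractf)

lemma E_formula:
  assumes m: "m > 0"
  shows "euclid_ip m (coeff_vec m (red m A1) @ coeff_vec m (red m A2)) (coeff_vec m (red m B1) @ coeff_vec m (red m B2))
     = coeff (red m (A1 * bar m B1 + A2 * bar m (B2::'a::field poly))) 0"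
  unfolding euclid_cv using pairing_lemma[OF m, of A1 B1] pairing_lemma[OF m, of A2 B2]
  by (simp add: red_add)

lemma S_formula:
  assumes m: "m > 0"
  shows "symp_ip m (coeff_vec m (red m A1) @ coeff_vec m (red m A2)) (coeff_vec m (red m B1) @ coeff_vec m (red m B2))
     = coeff (red m (A1 * bar m B2 - A2 * bar m (B1::'a::field poly))) 0"
  unfolding symp_cv using pairing_lemma[OF m, of A1 B2] pairing_lemma[OF m, of A2 B1]
  by (simp add: red_diff)

lemma qc_code_mem:
  "coeff_vec m (red m (r1 * u11 + r2 * u21)) @ coeff_vec m (red m (r1 * u12 + r2 * u22)) \<in> qc_code m u11 u12 u21 u22"
  unfolding qc_code_def by blast

lemma vec_decomp:
  assumes m: "m > 0" and len: "length v = 2 * m"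
  obtains b1 b2 where "v = coeff_vec m b1 @ coeff_vec m b2" "red m b1 = b1" "red m b2 = (b2::'a::field poly)"
proof -
  define b1 where "b1 = (\<Sum>i<m. monom (v ! i) i :: 'a poly)"
  define b2 where "b2 = (\<Sum>i<m. monom (v ! (m + i)) i :: 'a poly)"
  have c1: "coeff b1 n = (if n < m then v ! n else 0)" for n
    unfolding b1_def by (simp add: coeff_sum coeff_monom sum.delta)
  have c2: "coeff b2 n = (if n < m then v ! (m + n) else 0)" for n
    unfolding b2_def by (simp add: coeff_sum coeff_monom sum.delta)
  have "degree b1 \<le> m - 1" by (rule degree_le) (auto simp: c1)
  hence d1: "degree b1 < m" using m by linarith
  have "degree b2 \<le> m - 1" by (rule degree_le) (auto simp: c2)
  hence d2: "degree b2 < m" using m by linarith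
  have "v = coeff_vec m b1 @ coeff_vec m b2"
  proof (rule nth_equalityI)
    show "length v = length (coeff_vec m b1 @ coeff_vec m b2)" using len by simp
    fix i assume "i < length v"
    hence i: "i < 2 * m" using len by simp
    show "v ! i = (coeff_vec m b1 @ coeff_vec m b2) ! i"
    proof (cases "i < m")
      case True thus ?thesis by (simp add: nth_append c1)
    next
      case False
      hence "i - m < m" "m + (i - m) = i" using i by auto
      thus ?thesis using False by (simp add: nth_append c2)
    qed
  qed
  thus ?thesis using that red_small[OF m d1] red_small[OF m d2] by blast
qed

lemma mem_from_cong:
  assumes "x = coeff_vec m b1 @ coeff_vec m b2" "red m b1 = b1" "red m b2 = (b2::'a::field poly)"
    "[b1 = r1 * u11 + r2 * u21] (mod xm1 m)" "[b2 = r1 * u12 + r2 * u22] (mod xm1 m)"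
  shows "x \<in> qc_code m u11 u12 u21 u22"
proof -
  have "red m b1 = red m (r1 * u11 + r2 * u21)" "red m b2 = red m (r1 * u12 + r2 * u22)"
    using assms(4,5) by (simp_all add: red_cong_iff)
  hence "x = coeff_vec m (red m (r1 * u11 + r2 * u21)) @ coeff_vec m (red m (r1 * u12 + r2 * u22))"
    using assms(1-3) by simp
  thus ?thesis using qc_code_mem by metis
qed

lemma cong_zero_red: "[X = 0] (mod xm1 m) \<Longrightarrow> coeff (red m (X::'a::field poly)) 0 = 0"
  by (simp add: red_def cong_def)

lemma euclid_dual:
  fixes g1 g2 v1 v2 w0 :: "'a::field_gcd poly"
  assumes m: "m > 0"
    and g1: "lead_coeff g1 = 1" "g1 dvd xm1 m"
    and g2: "lead_coeff g2 = 1" "g2 dvd xm1 m"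
    and w0: "[w0 * (1 - v1 * v2) = 1] (mod xm1 m)"
  shows "dual m (euclid_ip m) (qc_code m g1 (v1 * g1) (v2 * g2) g2)
          = qc_code m (perp m g1) (- bar m v2 * perp m g1) (- bar m v1 * perp m g2) (perp m g2)"
    (is "dual m ?E ?C = ?D")
proof
  let ?N = "xm1 m :: 'a poly"
  define h1 where "h1 = perp m g1"
  define h2 where "h2 = perp m g2"
  define H1 where "H1 = sig m h1"
  define H2 where "H2 = sig m h2"
  have AH1: "[g1 * H1 = 0] (mod ?N)" unfolding H1_def h1_def by (rule perp_ann[OF m g1])
  have AH2: "[g2 * H2 = 0] (mod ?N)" unfolding H2_def h2_def by (rule perp_ann[OF m g2])
  have sv1: "[sig m (bar m v1) = v1] (mod ?N)" by (rule sig_bar[OF m])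
  have sv2: "[sig m (bar m v2) = v2] (mod ?N)" by (rule sig_bar[OF m])
  show "?D \<subseteq> dual m ?E ?C"
  proof
    fix x assume "x \<in> ?D"
    then obtain s1 s2 where x: "x = coeff_vec m (red m (s1 * h1 + s2 * (- bar m v1 * h2)))
         @ coeff_vec m (red m (s1 * (- bar m v2 * h1) + s2 * h2))"
      unfolding qc_code_def h1_def h2_def by blast
    define B1 where "B1 = s1 * h1 + s2 * (- bar m v1 * h2)"
    define B2 where "B2 = s1 * (- bar m v2 * h1) + s2 * h2"
    define S1 where "S1 = sig m s1"
    define S2 where "S2 = sig m s2"
    have "sig m B1 = S1 * H1 - S2 * sig m (bar m v1) * H2"
      by (simp add: B1_def S1_def S2_def H1_def H2_def sig_add sig_diff sig_mult sig_minus algebra_simps)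
    also have "[\<dots> = S1 * H1 - S2 * v1 * H2] (mod ?N)"
      by (intro cong_diff cong_mult cong_refl sv1)
    finally have sB1: "[bar m B1 = S1 * H1 - S2 * v1 * H2] (mod ?N)"
      using cong_trans[OF bar_sig[OF m]] by blast
    have "sig m B2 = S2 * H2 - S1 * sig m (bar m v2) * H1"
      by (simp add: B2_def S1_def S2_def H1_def H2_def sig_add sig_diff sig_mult sig_minus algebra_simps)
    also have "[\<dots> = S2 * H2 - S1 * v2 * H1] (mod ?N)"
      by (intro cong_diff cong_mult cong_refl sv2)
    finally have sB2: "[bar m B2 = S2 * H2 - S1 * v2 * H1] (mod ?N)"
      using cong_trans[OF bar_sig[OF m]] by blast
    have "x \<in> dual m ?E ?C"
      unfolding dual_def
    proof (intro CollectI conjI ballI)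
      show "length x = 2 * m" using x by simp
      fix u assume "u \<in> ?C"
      then obtain r1 r2 where u: "u = coeff_vec m (red m (r1 * g1 + r2 * (v2 * g2)))
         @ coeff_vec m (red m (r1 * (v1 * g1) + r2 * g2))"
        unfolding qc_code_def by blast
      define A1 where "A1 = r1 * g1 + r2 * (v2 * g2)"
      define A2 where "A2 = r1 * (v1 * g1) + r2 * g2"
      have "?E u x = coeff (red m (A1 * bar m B1 + A2 * bar m B2)) 0"
        unfolding u x A1_def A2_def B1_def B2_def by (rule E_formula[OF m])
      also have "\<dots> = 0"
      proof (rule cong_zero_red)
        have "[A1 * bar m B1 + A2 * bar m B2 = A1 * (S1 * H1 - S2 * v1 * H2) + A2 * (S2 * H2 - S1 * v2 * H1)] (mod ?N)"
          by (intro cong_add cong_mult cong_refl sB1 sB2)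
        also have "A1 * (S1 * H1 - S2 * v1 * H2) + A2 * (S2 * H2 - S1 * v2 * H1)
            = (r1 * S1 * (1 - v1 * v2)) * (g1 * H1) + (r2 * S2 * (1 - v1 * v2)) * (g2 * H2)"
          by (simp add: A1_def A2_def algebra_simps)
        also have "[\<dots> = (r1 * S1 * (1 - v1 * v2)) * 0 + (r2 * S2 * (1 - v1 * v2)) * 0] (mod ?N)"
          by (intro cong_add cong_mult cong_refl AH1 AH2)
        finally show "[A1 * bar m B1 + A2 * bar m B2 = 0] (mod ?N)" by simp
      qed
      finally show "?E u x = 0" .
    qed
    thus "x \<in> dual m ?E ?C" .
  qed
  show "dual m ?E ?C \<subseteq> ?D"
  proof
    fix x assume xd: "x \<in> dual m ?E ?C"
    hence len: "length x = 2 * m" and orth: "\<And>u. u \<in> ?C \<Longrightarrow> ?E u x = 0"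
      unfolding dual_def by auto
    obtain b1 b2 where x: "x = coeff_vec m b1 @ coeff_vec m b2" and rb1: "red m b1 = b1" and rb2: "red m b2 = (b2::'a poly)"
      using vec_decomp[OF m len] by blast
    have key: "coeff (red m ((r1 * g1 + r2 * (v2 * g2)) * bar m b1 + (r1 * (v1 * g1) + r2 * g2) * bar m b2)) 0 = 0" for r1 r2
    proof -
      have "?E (coeff_vec m (red m (r1 * g1 + r2 * (v2 * g2))) @ coeff_vec m (red m (r1 * (v1 * g1) + r2 * g2))) x = 0"
        by (rule orth) (rule qc_code_mem)
      moreover have "x = coeff_vec m (red m b1) @ coeff_vec m (red m b2)" using x rb1 rb2 by simp
      ultimately show ?thesis using E_formula[OF m] by metis
    qed
    define c1 where "c1 = bar m b1 + v1 * bar m b2"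
    define c2 where "c2 = v2 * bar m b1 + bar m b2"
    have z1: "[g1 * c1 = 0] (mod ?N)"
    proof (rule zero_lemma[OF m])
      fix r
      have "r * (g1 * c1) = (r * g1 + 0 * (v2 * g2)) * bar m b1 + (r * (v1 * g1) + 0 * g2) * bar m b2"
        by (simp add: c1_def algebra_simps)
      thus "coeff (red m (r * (g1 * c1))) 0 = 0" using key[of r 0] by simp
    qed
    have z2: "[g2 * c2 = 0] (mod ?N)"
    proof (rule zero_lemma[OF m])
      fix r
      have "r * (g2 * c2) = (0 * g1 + r * (v2 * g2)) * bar m b1 + (0 * (v1 * g1) + r * g2) * bar m b2"
        by (simp add: c2_def algebra_simps)
      thus "coeff (red m (r * (g2 * c2))) 0 = 0" using key[of 0 r] by simp
    qed
    obtain t1 where t1: "[sig m c1 = h1 * t1] (mod ?N)" using ann_solve[OF m g1 z1] h1_def by blast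
    obtain t2 where t2: "[sig m c2 = h2 * t2] (mod ?N)" using ann_solve[OF m g2 z2] h2_def by blast
    define W where "W = sig m w0"
    have sgv1: "[sig m v1 = bar m v1] (mod ?N)" using bar_sig[OF m, of v1] by (rule cong_sym)
    have sgv2: "[sig m v2 = bar m v2] (mod ?N)" using bar_sig[OF m, of v2] by (rule cong_sym)
    have bb1: "[bar m b1 = w0 * (c1 - v1 * c2)] (mod ?N)"
    proof -
      have "[(w0 * (1 - v1 * v2)) * bar m b1 = 1 * bar m b1] (mod ?N)"
        by (intro cong_mult w0 cong_refl)
      moreover have "w0 * (c1 - v1 * c2) = (w0 * (1 - v1 * v2)) * bar m b1"
        by (simp add: c1_def c2_def algebra_simps)
      ultimately have "[w0 * (c1 - v1 * c2) = bar m b1] (mod ?N)" by (metis mult_1_left)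
      thus ?thesis by (rule cong_sym)
    qed
    have bb2: "[bar m b2 = w0 * (c2 - v2 * c1)] (mod ?N)"
    proof -
      have "[(w0 * (1 - v1 * v2)) * bar m b2 = 1 * bar m b2] (mod ?N)"
        by (intro cong_mult w0 cong_refl)
      moreover have "w0 * (c2 - v2 * c1) = (w0 * (1 - v1 * v2)) * bar m b2"
        by (simp add: c1_def c2_def algebra_simps)
      ultimately have "[w0 * (c2 - v2 * c1) = bar m b2] (mod ?N)" by (metis mult_1_left)
      thus ?thesis by (rule cong_sym)
    qed
    have e1: "[b1 = (W * t1) * h1 + (W * t2) * (- bar m v1 * h2)] (mod ?N)"
    proof -
      have "[b1 = sig m (bar m b1)] (mod ?N)" using sig_bar[OF m, of b1] by (rule cong_sym)
      also have "[sig m (bar m b1) = sig m (w0 * (c1 - v1 * c2))] (mod ?N)" by (rule sig_cong[OF m bb1])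
      also have "sig m (w0 * (c1 - v1 * c2)) = W * (sig m c1 - sig m v1 * sig m c2)"
        by (simp add: W_def sig_mult sig_diff)
      also have "[\<dots> = W * (h1 * t1 - bar m v1 * (h2 * t2))] (mod ?N)"
        by (intro cong_mult cong_diff cong_refl t1 t2 sgv1)
      also have "W * (h1 * t1 - bar m v1 * (h2 * t2)) = (W * t1) * h1 + (W * t2) * (- bar m v1 * h2)"
        by (simp add: algebra_simps)
      finally show ?thesis .
    qed
    have e2: "[b2 = (W * t1) * (- bar m v2 * h1) + (W * t2) * h2] (mod ?N)"
    proof -
      have "[b2 = sig m (bar m b2)] (mod ?N)" using sig_bar[OF m, of b2] by (rule cong_sym)
      also have "[sig m (bar m b2) = sig m (w0 * (c2 - v2 * c1))] (mod ?N)" by (rule sig_cong[OF m bb2])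
      also have "sig m (w0 * (c2 - v2 * c1)) = W * (sig m c2 - sig m v2 * sig m c1)"
        by (simp add: W_def sig_mult sig_diff)
      also have "[\<dots> = W * (h2 * t2 - bar m v2 * (h1 * t1))] (mod ?N)"
        by (intro cong_mult cong_diff cong_refl t1 t2 sgv2)
      also have "W * (h2 * t2 - bar m v2 * (h1 * t1)) = (W * t1) * (- bar m v2 * h1) + (W * t2) * h2"
        by (simp add: algebra_simps)
      finally show ?thesis .
    qed
    show "x \<in> ?D" unfolding h1_def[symmetric] h2_def[symmetric]
      by (rule mem_from_cong[OF x rb1 rb2 e1 e2])
  qed
qed

lemma symp_dual:
  fixes g1 g2 v1 v2 w0 :: "'a::field_gcd poly"
  assumes m: "m > 0"
    and g1: "lead_coeff g1 = 1" "g1 dvd xm1 m"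
    and g2: "lead_coeff g2 = 1" "g2 dvd xm1 m"
    and w0: "[w0 * (1 - v1 * v2) = 1] (mod xm1 m)"
  shows "dual m (symp_ip m) (qc_code m g1 (v1 * g1) (v2 * g2) g2)
          = qc_code m (perp m g2) (bar m v1 * perp m g2) (bar m v2 * perp m g1) (perp m g1)"
    (is "dual m ?E ?C = ?D")
proof
  let ?N = "xm1 m :: 'a poly"
  define h1 where "h1 = perp m g1"
  define h2 where "h2 = perp m g2"
  define H1 where "H1 = sig m h1"
  define H2 where "H2 = sig m h2"
  have AH1: "[g1 * H1 = 0] (mod ?N)" unfolding H1_def h1_def by (rule perp_ann[OF m g1])
  have AH2: "[g2 * H2 = 0] (mod ?N)" unfolding H2_def h2_def by (rule perp_ann[OF m g2])
  have sv1: "[sig m (bar m v1) = v1] (mod ?N)" by (rule sig_bar[OF m])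
  have sv2: "[sig m (bar m v2) = v2] (mod ?N)" by (rule sig_bar[OF m])
  show "?D \<subseteq> dual m ?E ?C"
  proof
    fix x assume "x \<in> ?D"
    then obtain s1 s2 where x: "x = coeff_vec m (red m (s1 * h2 + s2 * (bar m v2 * h1)))
         @ coeff_vec m (red m (s1 * (bar m v1 * h2) + s2 * h1))"
      unfolding qc_code_def h1_def h2_def by blast
    define B1 where "B1 = s1 * h2 + s2 * (bar m v2 * h1)"
    define B2 where "B2 = s1 * (bar m v1 * h2) + s2 * h1"
    define S1 where "S1 = sig m s1"
    define S2 where "S2 = sig m s2"
    have "sig m B1 = S1 * H2 + S2 * sig m (bar m v2) * H1"
      by (simp add: B1_def S1_def S2_def H1_def H2_def sig_add sig_diff sig_mult sig_minus algebra_simps)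
    also have "[\<dots> = S1 * H2 + S2 * v2 * H1] (mod ?N)"
      by (intro cong_add cong_mult cong_refl sv2)
    finally have sB1: "[bar m B1 = S1 * H2 + S2 * v2 * H1] (mod ?N)"
      using cong_trans[OF bar_sig[OF m]] by blast
    have "sig m B2 = S1 * sig m (bar m v1) * H2 + S2 * H1"
      by (simp add: B2_def S1_def S2_def H1_def H2_def sig_add sig_diff sig_mult sig_minus algebra_simps)
    also have "[\<dots> = S1 * v1 * H2 + S2 * H1] (mod ?N)"
      by (intro cong_add cong_mult cong_refl sv1)
    finally have sB2: "[bar m B2 = S1 * v1 * H2 + S2 * H1] (mod ?N)"
      using cong_trans[OF bar_sig[OF m]] by blast
    have "x \<in> dual m ?E ?C"
      unfolding dual_def
    proof (intro CollectI conjI ballI)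
      show "length x = 2 * m" using x by simp
      fix u assume "u \<in> ?C"
      then obtain r1 r2 where u: "u = coeff_vec m (red m (r1 * g1 + r2 * (v2 * g2)))
         @ coeff_vec m (red m (r1 * (v1 * g1) + r2 * g2))"
        unfolding qc_code_def by blast
      define A1 where "A1 = r1 * g1 + r2 * (v2 * g2)"
      define A2 where "A2 = r1 * (v1 * g1) + r2 * g2"
      have "?E u x = coeff (red m (A1 * bar m B2 - A2 * bar m B1)) 0"
        unfolding u x A1_def A2_def B1_def B2_def by (rule S_formula[OF m])
      also have "\<dots> = 0"
      proof (rule cong_zero_red)
        have "[A1 * bar m B2 - A2 * bar m B1 = A1 * (S1 * v1 * H2 + S2 * H1) - A2 * (S1 * H2 + S2 * v2 * H1)] (mod ?N)"
          by (intro cong_diff cong_mult cong_refl sB1 sB2)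
        also have "A1 * (S1 * v1 * H2 + S2 * H1) - A2 * (S1 * H2 + S2 * v2 * H1)
            = (r1 * S2 * (1 - v1 * v2)) * (g1 * H1) + (r2 * S1 * (v1 * v2 - 1)) * (g2 * H2)"
          by (simp add: A1_def A2_def algebra_simps)
        also have "[\<dots> = (r1 * S2 * (1 - v1 * v2)) * 0 + (r2 * S1 * (v1 * v2 - 1)) * 0] (mod ?N)"
          by (intro cong_add cong_mult cong_refl AH1 AH2)
        finally show "[A1 * bar m B2 - A2 * bar m B1 = 0] (mod ?N)" by simp
      qed
      finally show "?E u x = 0" .
    qed
    thus "x \<in> dual m ?E ?C" .
  qed
  show "dual m ?E ?C \<subseteq> ?D"
  proof
    fix x assume xd: "x \<in> dual m ?E ?C"
    hence len: "length x = 2 * m" and orth: "\<And>u. u \<in> ?C \<Longrightarrow> ?E u x = 0"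
      unfolding dual_def by auto
    obtain b1 b2 where x: "x = coeff_vec m b1 @ coeff_vec m b2" and rb1: "red m b1 = b1" and rb2: "red m b2 = (b2::'a poly)"
      using vec_decomp[OF m len] by blast
    have key: "coeff (red m ((r1 * g1 + r2 * (v2 * g2)) * bar m b2 - (r1 * (v1 * g1) + r2 * g2) * bar m b1)) 0 = 0" for r1 r2
    proof -
      have "?E (coeff_vec m (red m (r1 * g1 + r2 * (v2 * g2))) @ coeff_vec m (red m (r1 * (v1 * g1) + r2 * g2))) x = 0"
        by (rule orth) (rule qc_code_mem)
      moreover have "x = coeff_vec m (red m b1) @ coeff_vec m (red m b2)" using x rb1 rb2 by simp
      ultimately show ?thesis using S_formula[OF m] by metis
    qed
    define c1 where "c1 = bar m b2 - v1 * bar m b1"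
    define c2 where "c2 = v2 * bar m b2 - bar m b1"
    have z1: "[g1 * c1 = 0] (mod ?N)"
    proof (rule zero_lemma[OF m])
      fix r
      have "r * (g1 * c1) = (r * g1 + 0 * (v2 * g2)) * bar m b2 - (r * (v1 * g1) + 0 * g2) * bar m b1"
        by (simp add: c1_def algebra_simps)
      thus "coeff (red m (r * (g1 * c1))) 0 = 0" using key[of r 0] by simp
    qed
    have z2: "[g2 * c2 = 0] (mod ?N)"
    proof (rule zero_lemma[OF m])
      fix r
      have "r * (g2 * c2) = (0 * g1 + r * (v2 * g2)) * bar m b2 - (0 * (v1 * g1) + r * g2) * bar m b1"
        by (simp add: c2_def algebra_simps)
      thus "coeff (red m (r * (g2 * c2))) 0 = 0" using key[of 0 r] by simp
    qed
    obtain t1 where t1: "[sig m c1 = h1 * t1] (mod ?N)" using ann_solve[OF m g1 z1] h1_def by blast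
    obtain t2 where t2: "[sig m c2 = h2 * t2] (mod ?N)" using ann_solve[OF m g2 z2] h2_def by blast
    define W where "W = sig m w0"
    have sgv1: "[sig m v1 = bar m v1] (mod ?N)" using bar_sig[OF m, of v1] by (rule cong_sym)
    have sgv2: "[sig m v2 = bar m v2] (mod ?N)" using bar_sig[OF m, of v2] by (rule cong_sym)
    have bb1: "[bar m b1 = w0 * (v2 * c1 - c2)] (mod ?N)"
    proof -
      have "[(w0 * (1 - v1 * v2)) * bar m b1 = 1 * bar m b1] (mod ?N)"
        by (intro cong_mult w0 cong_refl)
      moreover have "w0 * (v2 * c1 - c2) = (w0 * (1 - v1 * v2)) * bar m b1"
        by (simp add: c1_def c2_def algebra_simps)
      ultimately have "[w0 * (v2 * c1 - c2) = bar m b1] (mod ?N)" by (metis mult_1_left)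
      thus ?thesis by (rule cong_sym)
    qed
    have bb2: "[bar m b2 = w0 * (c1 - v1 * c2)] (mod ?N)"
    proof -
      have "[(w0 * (1 - v1 * v2)) * bar m b2 = 1 * bar m b2] (mod ?N)"
        by (intro cong_mult w0 cong_refl)
      moreover have "w0 * (c1 - v1 * c2) = (w0 * (1 - v1 * v2)) * bar m b2"
        by (simp add: c1_def c2_def algebra_simps)
      ultimately have "[w0 * (c1 - v1 * c2) = bar m b2] (mod ?N)" by (metis mult_1_left)
      thus ?thesis by (rule cong_sym)
    qed
    have e1: "[b1 = (- (W * t2)) * h2 + (W * t1) * (bar m v2 * h1)] (mod ?N)"
    proof -
      have "[b1 = sig m (bar m b1)] (mod ?N)" using sig_bar[OF m, of b1] by (rule cong_sym)
      also have "[sig m (bar m b1) = sig m (w0 * (v2 * c1 - c2))] (mod ?N)" by (rule sig_cong[OF m bb1])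
      also have "sig m (w0 * (v2 * c1 - c2)) = W * (sig m v2 * sig m c1 - sig m c2)"
        by (simp add: W_def sig_mult sig_diff)
      also have "[\<dots> = W * (bar m v2 * (h1 * t1) - h2 * t2)] (mod ?N)"
        by (intro cong_mult cong_diff cong_refl t1 t2 sgv2)
      also have "W * (bar m v2 * (h1 * t1) - h2 * t2) = (- (W * t2)) * h2 + (W * t1) * (bar m v2 * h1)"
        by (simp add: algebra_simps)
      finally show ?thesis .
    qed
    have e2: "[b2 = (- (W * t2)) * (bar m v1 * h2) + (W * t1) * h1] (mod ?N)"
    proof -
      have "[b2 = sig m (bar m b2)] (mod ?N)" using sig_bar[OF m, of b2] by (rule cong_sym)
      also have "[sig m (bar m b2) = sig m (w0 * (c1 - v1 * c2))] (mod ?N)" by (rule sig_cong[OF m bb2])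
      also have "sig m (w0 * (c1 - v1 * c2)) = W * (sig m c1 - sig m v1 * sig m c2)"
        by (simp add: W_def sig_mult sig_diff)
      also have "[\<dots> = W * (h1 * t1 - bar m v1 * (h2 * t2))] (mod ?N)"
        by (intro cong_mult cong_diff cong_refl t1 t2 sgv1)
      also have "W * (h1 * t1 - bar m v1 * (h2 * t2)) = (- (W * t2)) * (bar m v1 * h2) + (W * t1) * h1"
        by (simp add: algebra_simps)
      finally show ?thesis .
    qed
    show "x \<in> ?D" unfolding h1_def[symmetric] h2_def[symmetric]
      by (rule mem_from_cong[OF x rb1 rb2 e1 e2])
  qed
qed

lemma prime_div_card_is_char:
  assumes r: "prime (r::nat)" and dv: "r dvd CARD('a::{field,finite})"
  shows "r = CHAR('a)"
proof -
  define G where "G = \<lparr> carrier = (UNIV :: 'a set), monoid.mult = (+), one = (0 :: 'a) \<rparr>"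
  have grp: "group G"
  proof (rule groupI)
    fix x assume x: "x \<in> carrier G"
    show "\<exists>y\<in>carrier G. y \<otimes>\<^bsub>G\<^esub> x = \<one>\<^bsub>G\<^esub>"
      by (intro bexI[of _ "-x"]) (auto simp: G_def)
  qed (auto simp: G_def add_ac)
  have ord: "order G = r ^ 1 * (CARD('a) div r)" using dv by (simp add: order_def G_def)
  have fin: "finite (carrier G)" by (simp add: G_def)
  obtain H where H: "subgroup H G" "card H = r ^ 1"
    using sylow_thm[OF r grp ord fin] by blast
  have cl: "x + y \<in> H" if "x \<in> H" "y \<in> H" for x y
    using subgroup.m_closed[OF H(1) that] by (simp add: G_def)
  have finH: "finite H" by simp
  have r2: "card H \<ge> 2" using H(2) r by (simp add: prime_ge_2_nat)
  obtain x where x: "x \<in> H" "x \<noteq> 0"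
  proof -
    have "\<not> H \<subseteq> {0}"
    proof
      assume "H \<subseteq> {0}"
      hence "card H \<le> card {0::'a}" by (intro card_mono) auto
      thus False using r2 by simp
    qed
    thus ?thesis using that by blast
  qed
  have img: "(\<lambda>y. x + y) ` H = H"
    by (rule endo_inj_surj[OF finH]) (auto simp: cl[OF x(1)] inj_on_def)
  have "sum (\<lambda>y. y) H = sum (\<lambda>y. y) ((\<lambda>y. x + y) ` H)" using img by simp
  also have "\<dots> = sum (\<lambda>y. x + y) H" by (subst sum.reindex) (auto simp: inj_on_def)
  also have "\<dots> = of_nat (card H) * x + sum (\<lambda>y. y) H" by (simp add: sum.distrib)
  finally have "of_nat (card H) * x = 0" by simp
  hence "of_nat r = (0::'a)" using x(2) H(2) by simp
  hence "CHAR('a) dvd r" by (simp add: of_nat_eq_0_iff_char_dvd)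
  moreover have "CHAR('a) \<noteq> 1"
  proof -
    have "prime CHAR('a)" by (rule prime_CHAR_semidom[OF finite_imp_CHAR_pos]) simp
    thus ?thesis by auto
  qed
  ultimately show ?thesis using r by (metis prime_nat_iff)
qed

lemma char_prime_fin: "prime CHAR('a::{field,finite})"
  by (rule prime_CHAR_semidom[OF finite_imp_CHAR_pos]) simp

lemma q_char_power:
  assumes "CARD('a::{field,finite}) = q ^ 2"
  shows "\<exists>k. q = CHAR('a) ^ k"
proof -
  have q0: "q > 0" using assms by (metis finite_UNIV_card_ge_0 finite zero_less_power_eq zero_power2 gr0I)
  have pf: "prime_factors q \<subseteq> {CHAR('a)}"
  proof
    fix r assume "r \<in> prime_factors q"
    hence "prime r" "r dvd q" by auto
    hence "r dvd CARD('a)" using assms by (simp add: power2_eq_square)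
    thus "r \<in> {CHAR('a)}" using prime_div_card_is_char[OF \<open>prime r\<close>] by simp
  qed
  have eq: "q = (\<Prod>p\<in>prime_factors q. p ^ multiplicity p q)" by (rule prime_factorization_nat[OF q0])
  from pf have "prime_factors q = {} \<or> prime_factors q = {CHAR('a)}" by (simp add: subset_singleton_iff)
  thus ?thesis
  proof
    assume "prime_factors q = {}"
    hence "q = CHAR('a) ^ 0" using eq by simp
    thus ?thesis by blast
  next
    assume "prime_factors q = {CHAR('a)}"
    hence "q = CHAR('a) ^ multiplicity CHAR('a) q" using eq by simp
    thus ?thesis by blast
  qed
qed

lemma power_card_same: "(x::'a::{field,finite}) ^ CARD('a) = x"
proof (cases "x = 0")
  case False
  have "x * (\<Prod>y\<in>UNIV-{0}. x * y) = x * x ^ (CARD('a) - 1) * \<Prod>(UNIV-{0::'a})"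
    by (simp add: prod.distrib mult_ac)
  also have "x * x ^ (CARD('a) - 1) = x ^ Suc (CARD('a) - 1)"
    by (subst power_Suc) auto
  also have "Suc (CARD('a) - 1) = CARD('a)"
    using finite_UNIV_card_ge_0[where ?'a = 'a] by simp
  also have "(\<Prod>y\<in>UNIV-{0}. x * y) = (\<Prod>y\<in>UNIV-{0::'a}. y)"
    by (rule prod.reindex_bij_witness[of _ "\<lambda>y. y / x" "\<lambda>y. x * y"]) (use False in auto)
  finally show ?thesis
    by simp
qed (use finite_UNIV_card_ge_0[where ?'a = 'a] in auto)

locale frobq =
  fixes q :: nat
  assumes card_q: "CARD('a::{field_gcd,finite}) = q ^ 2"
begin

lemma q_pos: "q > 0"
  using card_q by (metis finite_UNIV_card_ge_0 finite zero_less_power_eq zero_power2 gr0I)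

lemma pw_add: "((a::'a) + b) ^ q = a ^ q + b ^ q"
proof -
  obtain k where "q = CHAR('a) ^ k" using q_char_power[OF card_q] by blast
  thus ?thesis using freshmans_dream'[OF char_prime_fin] by blast
qed

lemma pw_sum: "(sum f A :: 'a) ^ q = (\<Sum>i\<in>A. f i ^ q)"
proof -
  obtain k where "q = CHAR('a) ^ k" using q_char_power[OF card_q] by blast
  thus ?thesis using freshmans_dream_sum'[OF char_prime_fin] by blast
qed

lemma pw_zero: "(0::'a) ^ q = 0" using q_pos by simp

lemma pw_minus: "(- (a::'a)) ^ q = - (a ^ q)"
proof -
  have "(a + - a) ^ q = a ^ q + (- a) ^ q" by (rule pw_add)
  thus ?thesis using pw_zero by (simp add: eq_neg_iff_add_eq_0 add.commute)
qed

lemma pw_pw: "((a::'a) ^ q) ^ q = a"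
proof -
  have "(a ^ q) ^ q = a ^ CARD('a)" by (simp add: card_q power2_eq_square power_mult)
  thus ?thesis by (simp add: power_card_same)
qed

lemma pw_eq_0: "((a::'a) ^ q = 0) \<longleftrightarrow> a = 0" using q_pos by simp

lemma coeff_frob: "coeff (frob q p) n = (coeff p n :: 'a) ^ q"
  unfolding frob_def by (simp add: coeff_map_poly pw_zero)

lemma frob_add: "frob q (p + r) = frob q p + frob q (r :: 'a poly)"
  by (rule poly_eqI) (simp add: coeff_frob pw_add)

lemma frob_minus: "frob q (- r) = - frob q (r :: 'a poly)"
  by (rule poly_eqI) (simp add: coeff_frob pw_minus)

lemma frob_diff: "frob q (p - r) = frob q p - frob q (r :: 'a poly)"
  using frob_add[of p "- r"] by (simp add: frob_minus)

lemma frob_mult: "frob q (p * r) = frob q p * frob q (r :: 'a poly)"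
  by (rule poly_eqI) (simp add: coeff_frob coeff_mult pw_sum power_mult_distrib)

lemma frob_sum: "frob q (sum f A) = (\<Sum>i\<in>A. frob q (f i :: 'a poly))"
  by (induction A rule: infinite_finite_induct) (simp_all add: frob_add, simp_all add: frob_def)

lemma frob_monom: "frob q (monom c n) = monom ((c::'a) ^ q) n"
  unfolding frob_def by (rule map_poly_monom) (simp add: pw_zero)

lemma frob_one: "frob q (1 :: 'a poly) = 1"
  by (rule poly_eqI) (simp add: coeff_frob coeff_1 pw_zero)

lemma frob_frob: "frob q (frob q p) = (p :: 'a poly)"
  by (rule poly_eqI) (simp add: coeff_frob pw_pw)

lemma frob_xm1: "frob q (xm1 m :: 'a poly) = xm1 m"
  unfolding xm1_def by (simp add: frob_diff frob_monom frob_one)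

lemma degree_frob: "degree (frob q (p :: 'a poly)) = degree p"
  unfolding frob_def by (rule degree_map_poly) (simp add: pw_eq_0)

lemma lead_frob: "lead_coeff (frob q (p :: 'a poly)) = (lead_coeff p) ^ q"
  by (simp add: degree_frob coeff_frob)

lemma frob_red:
  assumes m: "m > 0"
  shows "frob q (red m p) = red m (frob q (p :: 'a poly))"
proof -
  let ?N = "xm1 m :: 'a poly"
  have "p = red m p + (p div ?N) * ?N" unfolding red_def by simp
  hence "frob q p = frob q (red m p) + frob q (p div ?N) * ?N"
    by (metis frob_add frob_mult frob_xm1)
  hence "red m (frob q p) = frob q (red m p) mod ?N" unfolding red_def by (simp add: mod_mult_self1)
  also have "\<dots> = frob q (red m p)"
    by (rule mod_poly_less) (simp add: degree_frob red_deg[OF m] xm1_deg[OF m])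
  finally show ?thesis by simp
qed

lemma frob_cong:
  assumes m: "m > 0" and "[a = b] (mod xm1 m)"
  shows "[frob q a = frob q (b :: 'a poly)] (mod xm1 m)"
proof -
  have "red m a = red m b" using assms(2) by (simp add: red_cong_iff)
  hence "red m (frob q a) = red m (frob q b)" by (metis frob_red[OF m])
  thus ?thesis by (simp add: red_cong_iff)
qed

lemma frob_bar:
  assumes m: "m > 0"
  shows "frob q (bar m v) = bar m (frob q (v :: 'a poly))"
  unfolding bar_def by (simp add: frob_sum frob_monom frob_red[OF m, symmetric] coeff_frob)

lemma cv_frob: "map (\<lambda>c. c ^ q) (coeff_vec m p) = coeff_vec m (frob q (p :: 'a poly))"
  by (simp add: coeff_vec_def coeff_frob)

lemma frob_image:
  assumes m: "m > 0"
  shows "map (\<lambda>c. c ^ q) ` qc_code m u11 u12 u21 u22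
      = qc_code m (frob q u11) (frob q u12) (frob q u21) (frob q (u22 :: 'a poly))"
proof -
  have e: "map (\<lambda>c. c ^ q) (coeff_vec m (red m (r1 * u11 + r2 * u21)) @ coeff_vec m (red m (r1 * u12 + r2 * u22)))
    = coeff_vec m (red m (frob q r1 * frob q u11 + frob q r2 * frob q u21)) @
      coeff_vec m (red m (frob q r1 * frob q u12 + frob q r2 * frob q u22))" for r1 r2
    by (simp add: cv_frob frob_red[OF m] frob_add frob_mult)
  show ?thesis
  proof
    show "map (\<lambda>c. c ^ q) ` qc_code m u11 u12 u21 u22 \<subseteq> qc_code m (frob q u11) (frob q u12) (frob q u21) (frob q u22)"
      unfolding qc_code_def using e by blast
  next
    show "qc_code m (frob q u11) (frob q u12) (frob q u21) (frob q u22) \<subseteq> map (\<lambda>c. c ^ q) ` qc_code m u11 u12 u21 u22"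
    proof
      fix x assume "x \<in> qc_code m (frob q u11) (frob q u12) (frob q u21) (frob q u22)"
      then obtain s1 s2 where x: "x = coeff_vec m (red m (s1 * frob q u11 + s2 * frob q u21)) @
          coeff_vec m (red m (s1 * frob q u12 + s2 * frob q u22))" unfolding qc_code_def by blast
      hence "x = map (\<lambda>c. c ^ q) (coeff_vec m (red m (frob q s1 * u11 + frob q s2 * u21)) @ coeff_vec m (red m (frob q s1 * u12 + frob q s2 * u22)))"
        using e[of "frob q s1" "frob q s2"] by (simp add: frob_frob)
      thus "x \<in> map (\<lambda>c. c ^ q) ` qc_code m u11 u12 u21 u22" unfolding qc_code_def by blast
    qed
  qed
qed

lemma herm_dual_eq:
  assumes m: "m > 0" and len: "\<And>u. u \<in> Cd \<Longrightarrow> length u = 2 * m"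
  shows "dual m (herm_ip q m) Cd = dual m (euclid_ip m) (map (\<lambda>c. (c::'a) ^ q) ` Cd)"
proof -
  have "herm_ip q m u v = euclid_ip m (map (\<lambda>c. c ^ q) u) v" if "u \<in> Cd" for u v
    using len[OF that] by (simp add: herm_ip_def euclid_ip_def)
  thus ?thesis unfolding dual_def by auto
qed

end

lemma qc_len: "u \<in> qc_code m a b c d \<Longrightarrow> length u = 2 * m"
  unfolding qc_code_def by auto

theorem mainTheorem5:
  fixes g1 g2 v1 v2 :: "'a::{field_gcd,finite} poly" and m q :: nat
  assumes "m > 0"
    and "lead_coeff g1 = 1" and "g1 dvd xm1 m"
    and "lead_coeff g2 = 1" and "g2 dvd xm1 m"
    and "degree v1 < m" and "degree v2 < m"
    and "gcd (v1 * v2 - 1) (xm1 m) = 1"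
  shows
    "(CARD('a) = q \<longrightarrow>
        dual m (euclid_ip m) (qc_code m g1 (v1 * g1) (v2 * g2) g2)
          = qc_code m (perp m g1) (- bar m v2 * perp m g1) (- bar m v1 * perp m g2) (perp m g2)
      \<and> dual m (symp_ip m) (qc_code m g1 (v1 * g1) (v2 * g2) g2)
          = qc_code m (perp m g2) (bar m v1 * perp m g2) (bar m v2 * perp m g1) (perp m g1))
     \<and> (CARD('a) = q ^ 2 \<longrightarrow>
        dual m (herm_ip q m) (qc_code m g1 (v1 * g1) (v2 * g2) g2)
          = qc_code m (perpH q m g1) (- frob q (bar m v2) * perpH q m g1)
                      (- frob q (bar m v1) * perpH q m g2) (perpH q m g2))"
proof -
  note m = assms(1)
  note g1 = assms(2,3)
  note g2 = assms(4,5)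
  let ?N = "xm1 m :: 'a poly"
  obtain x y where xy: "x * (v1 * v2 - 1) + y * ?N = 1"
    using bezout_coefficients_fst_snd[of "v1 * v2 - 1" ?N] assms(8) by metis
  define w0 where "w0 = - x"
  have w0: "[w0 * (1 - v1 * v2) = 1] (mod ?N)"
  proof -
    have "w0 * (1 - v1 * v2) - 1 = - (y * ?N)" using xy unfolding w0_def by (simp add: algebra_simps)
    hence "?N dvd w0 * (1 - v1 * v2) - 1" by simp
    thus ?thesis by (simp add: cong_iff_dvd_diff)
  qed
  have part1: "CARD('a) = q \<longrightarrow>
        dual m (euclid_ip m) (qc_code m g1 (v1 * g1) (v2 * g2) g2)
          = qc_code m (perp m g1) (- bar m v2 * perp m g1) (- bar m v1 * perp m g2) (perp m g2)
      \<and> dual m (symp_ip m) (qc_code m g1 (v1 * g1) (v2 * g2) g2)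
          = qc_code m (perp m g2) (bar m v1 * perp m g2) (bar m v2 * perp m g1) (perp m g1)"
    using euclid_dual[OF m g1 g2 w0] symp_dual[OF m g1 g2 w0] by blast
  have part2: "dual m (herm_ip q m) (qc_code m g1 (v1 * g1) (v2 * g2) g2)
          = qc_code m (perpH q m g1) (- frob q (bar m v2) * perpH q m g1)
                      (- frob q (bar m v1) * perpH q m g2) (perpH q m g2)"
    if card: "CARD('a) = q ^ 2"
  proof -
    interpret F: frobq q using card by unfold_locales
    define f :: "'a poly \<Rightarrow> 'a poly" where "f = frob q"
    have fg1: "lead_coeff (f g1) = 1" "f g1 dvd ?N"
    proof -
      show "lead_coeff (f g1) = 1" using g1(1) by (simp add: f_def F.lead_frob)
      obtain k where "?N = g1 * k" using g1(2) by blast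
      hence "?N = f g1 * f k" unfolding f_def by (metis F.frob_mult F.frob_xm1)
      thus "f g1 dvd ?N" by simp
    qed
    have fg2: "lead_coeff (f g2) = 1" "f g2 dvd ?N"
    proof -
      show "lead_coeff (f g2) = 1" using g2(1) by (simp add: f_def F.lead_frob)
      obtain k where "?N = g2 * k" using g2(2) by blast
      hence "?N = f g2 * f k" unfolding f_def by (metis F.frob_mult F.frob_xm1)
      thus "f g2 dvd ?N" by simp
    qed
    have fw0: "[f w0 * (1 - f v1 * f v2) = 1] (mod ?N)"
      using F.frob_cong[OF m w0] unfolding f_def by (simp add: F.frob_mult F.frob_diff F.frob_one)
    have "dual m (herm_ip q m) (qc_code m g1 (v1 * g1) (v2 * g2) g2)
        = dual m (euclid_ip m) (map (\<lambda>c. c ^ q) ` qc_code m g1 (v1 * g1) (v2 * g2) g2)"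
      by (rule F.herm_dual_eq[OF m qc_len])
    also have "map (\<lambda>c. c ^ q) ` qc_code m g1 (v1 * g1) (v2 * g2) g2
        = qc_code m (f g1) (f v1 * f g1) (f v2 * f g2) (f g2)"
      unfolding F.frob_image[OF m] f_def by (simp add: F.frob_mult)
    also have "dual m (euclid_ip m) \<dots> = qc_code m (perp m (f g1)) (- bar m (f v2) * perp m (f g1))
        (- bar m (f v1) * perp m (f g2)) (perp m (f g2))"
      by (rule euclid_dual[OF m fg1 fg2 fw0])
    also have "\<dots> = qc_code m (perpH q m g1) (- frob q (bar m v2) * perpH q m g1)
                      (- frob q (bar m v1) * perpH q m g2) (perpH q m g2)"
      unfolding f_def perpH_def by (simp add: F.frob_bar[OF m])
    finally show ?thesis .
  qed
  show ?thesis using part1 part2 by blast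
qed

end
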